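(* Let $u$ be the solution of the Cauchy problem in the context and let $X(x,t)$ be the value at time $t$ of the solution of the quasispecies equation \[ \dot y=-\sigma y(1-y)+m_0f_0(1-y)-m_1f_1y,\qquad y(0)=x. \] Then $1\ge u(x,t)\ge X(x,t)$ for all $0\le x\le1$ and $t\ge0$.
   Context: Constants: $f_0>0$, $f_1\ge0$ with $\sigma=f_0-f_1>0$; $\lambda_0,\lambda_1\ge0$; $\gamma_0,\gamma_1\in(0,1]$; $m_0=\lambda_0\gamma_0$, $m_1=\lambda_1\gamma_1$. With $\mathcal{J}_0u(x,t)=u(x+\gamma_0(1-x),t)-u(x,t)$ and $\mathcal{J}_1u(x,t)=u(x-\gamma_1x,t)-u(x,t)$, $u$ is the unique (mild) solution, which is $C^\infty$ on $[0,1]\times[0,\infty)$, of \[ \partial_tu+\sigma(1-x)x\,\partial_xu=\lambda_0f_0\mathcal{J}_0u+\lambda_1f_1\mathcal{J}_1u\ (0\le x\le1,\ t>0),\quad u(x,0)=x. \] ($u(x,t)$ is the expected frequency of species 1 under rare mutations.) *)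

theory Defs
  imports "HOL-Analysis.Analysis"
begin

end

theory Submission
  imports Defs
begin


lemma maxprin:
  fixes W Wx Wt :: "real \<Rightarrow> real \<Rightarrow> real" and s ca cb ga gb :: real
  assumes cont: "continuous_on ({0..1} \<times> {0..}) (\<lambda>(x,t). W x t)"
    and dx: "\<And>x t. x\<in>{0..1} \<Longrightarrow> t>0 \<Longrightarrow> ((\<lambda>y. W y t) has_real_derivative Wx x t) (at x within {0..1})"
    and dt: "\<And>x t. x\<in>{0..1} \<Longrightarrow> t>0 \<Longrightarrow> ((\<lambda>s. W x s) has_real_derivative Wt x t) (at t within {0..})"
    and ineq: "\<And>x t. x\<in>{0..1} \<Longrightarrow> t>0 \<Longrightarrow> Wt x t + s*(1-x)*x*Wx x t - ca*(W (x+ga*(1-x)) t - W x t) - cb*(W (x - gb*x) t - W x t) \<le> 0"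
    and ca: "ca \<ge> 0" and cb: "cb \<ge> 0" and ga: "0 \<le> ga" "ga \<le> 1" and gb: "0 \<le> gb" "gb \<le> 1"
    and init: "\<And>x. x\<in>{0..1} \<Longrightarrow> W x 0 \<le> 0"
    and x: "x\<in>{0..1}" and t: "t \<ge> 0"
  shows "W x t \<le> 0"
proof -
  have A: "W x' t' - e * t' \<le> 0" if T: "T > 0" and e: "e > 0" and x': "x'\<in>{0..1}" and t': "t'\<in>{0..T}" for T e x' t'
  proof -
    define S where "S = {0..1::real} \<times> {0..T}"
    have cS: "compact S" unfolding S_def by (intro compact_Times compact_Icc)
    have neS: "S \<noteq> {}" using T unfolding S_def by auto
    have subS: "S \<subseteq> {0..1} \<times> {0..}" unfolding S_def by auto
    have contS: "continuous_on S (\<lambda>p. (\<lambda>(x,t). W x t) p - e * snd p)"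
      by (intro continuous_on_diff continuous_on_subset[OF cont subS] continuous_intros)
    obtain p where pS: "p \<in> S" and pmax: "\<And>q. q \<in> S \<Longrightarrow> (\<lambda>(x,t). W x t) q - e * snd q \<le> (\<lambda>(x,t). W x t) p - e * snd p"
      using continuous_attains_sup[OF cS neS contS] by blast
    obtain a \<tau> where p: "p = (a, \<tau>)" by (cases p)
    have a: "a \<in> {0..1}" and tau: "\<tau> \<in> {0..T}" using pS p S_def by auto
    have max: "W y r - e * r \<le> W a \<tau> - e * \<tau>" if "y \<in> {0..1}" "r \<in> {0..T}" for y r
      using pmax[of "(y,r)"] that p S_def by auto
    show ?thesis
    proof (cases "\<tau> = 0")
      case True
      then show ?thesis using max[OF x' t'] init[OF a] by simp
    next
      case False
      then have tpos: "\<tau> > 0" using tau by auto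
      have intt: "\<tau> \<in> interior {0::real..}" using tpos by simp
      have D1: "DERIV (\<lambda>r. W a r - e * r) \<tau> :> Wt a \<tau> - e"
        using dt[OF a tpos] at_within_interior[OF intt]
        by (auto intro!: derivative_eq_intros)
      have Wt_ge: "Wt a \<tau> \<ge> e"
      proof (rule ccontr)
        assume "\<not> ?thesis"
        then have "Wt a \<tau> - e < 0" by simp
        from DERIV_neg_dec_left[OF D1 this] obtain d where d: "d > 0"
          and dd: "\<And>h. h > 0 \<Longrightarrow> h < d \<Longrightarrow> W a \<tau> - e * \<tau> < W a (\<tau> - h) - e * (\<tau> - h)" by blast
        define h where "h = min (d/2) (\<tau>/2)"
        have "h > 0" "h < d" using d tpos by (auto simp: h_def)
        then have "W a \<tau> - e * \<tau> < W a (\<tau> - h) - e * (\<tau> - h)" by (rule dd)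
        moreover have "\<tau> - h \<in> {0..T}" using tau tpos d by (auto simp: h_def)
        ultimately show False using max[OF a] by fastforce
      qed
      have drift: "s*(1-a)*a*Wx a \<tau> = 0"
      proof (cases "a = 0 \<or> a = 1")
        case True then show ?thesis by auto
      next
        case False
        then have a01: "0 < a" "a < 1" using a by auto
        have inta: "a \<in> interior {0::real..1}" using a01 by simp
        have D2: "DERIV (\<lambda>y. W y \<tau>) a :> Wx a \<tau>"
          using dx[OF a tpos] at_within_interior[OF inta] by simp
        have "Wx a \<tau> = 0"
        proof (rule DERIV_local_max[OF D2])
          show "0 < min a (1-a)" using a01 by simp
          show "\<forall>y. \<bar>a - y\<bar> < min a (1 - a) \<longrightarrow> W y \<tau> \<le> W a \<tau>"
          proof (intro allI impI)
            fix y assume "\<bar>a - y\<bar> < min a (1 - a)"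
            then have "y \<in> {0..1}" by auto
            from max[OF this tau] show "W y \<tau> \<le> W a \<tau>" by simp
          qed
        qed
        then show ?thesis by simp
      qed
      have j0: "W (a+ga*(1-a)) \<tau> \<le> W a \<tau>"
      proof -
        have "ga*(1-a) \<le> 1*(1-a)" using a ga by (intro mult_right_mono) auto
        moreover have "ga*(1-a) \<ge> 0" using a ga by simp
        ultimately have "a+ga*(1-a) \<in> {0..1}" using a by auto
        from max[OF this tau] show ?thesis by simp
      qed
      have j1: "W (a - gb*a) \<tau> \<le> W a \<tau>"
      proof -
        have "gb*a \<le> 1*a" using a gb by (intro mult_right_mono) auto
        moreover have "gb*a \<ge> 0" using a gb by simp
        ultimately have "a - gb*a \<in> {0..1}" using a by auto
        from max[OF this tau] show ?thesis by simp
      qed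
      have "ca*(W (a+ga*(1-a)) \<tau> - W a \<tau>) \<le> 0"
        using ca j0 by (simp add: mult_nonneg_nonpos)
      moreover have "cb*(W (a - gb*a) \<tau> - W a \<tau>) \<le> 0"
        using cb j1 by (simp add: mult_nonneg_nonpos)
      ultimately have "Wt a \<tau> \<le> 0" using ineq[OF a tpos] drift by linarith
      then show ?thesis using Wt_ge e by linarith
    qed
  qed
  show ?thesis
  proof (rule field_le_epsilon)
    fix e :: real assume e: "e > 0"
    have "W x t - (e/(t+1)) * t \<le> 0"
      using A[of "t+1" "e/(t+1)" x t] e t x by auto
    moreover have "(e/(t+1)) * t \<le> e" using e t by (simp add: field_simps)
    ultimately show "W x t \<le> 0 + e" by linarith
  qed
qed



lemma roots:
  fixes s a0 b0 :: real
  assumes s: "s > 0" and A: "a0 \<ge> 0" and B: "b0 \<ge> 0"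
  obtains r d where "d \<ge> 0" "r + d \<ge> 1"
    "\<And>y. - s*y*(1-y) + a0*(1-y) - b0*y = s*(y-r)*(y-r-d)"
proof -
  define S where "S = s + a0 + b0"
  define q where "q = sqrt (S^2 - 4 * s * a0)"
  have Dnn: "S^2 - 4 * s * a0 \<ge> 0"
  proof -
    have "S^2 - 4 * s * a0 = (s - a0)^2 + b0*(2 * s + 2 * a0 + b0)" unfolding S_def by (simp add: power2_eq_square algebra_simps)
    also have "\<dots> \<ge> 0" using s A B by (intro add_nonneg_nonneg mult_nonneg_nonneg) auto
    finally show ?thesis .
  qed
  have q2: "q^2 = S^2 - 4 * s * a0" unfolding q_def by (rule real_sqrt_pow2[OF Dnn])
  have q0: "q \<ge> 0" unfolding q_def using Dnn by simp
  define r where "r = (S - q)/(2* s)"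
  define d where "d = q/s"
  have "d \<ge> 0" using q0 s by (simp add: d_def)
  moreover have "r + d \<ge> 1"
  proof (cases "S \<ge> 2* s")
    case True
    then show ?thesis using q0 s by (simp add: r_def d_def field_simps)
  next
    case False
    have "(2* s - S)^2 \<le> q^2" unfolding q2 S_def using B s by (simp add: power2_eq_square algebra_simps)
    then have "2* s - S \<le> q" using q0 False by (meson power2_le_imp_le)
    then show ?thesis using s by (simp add: r_def d_def field_simps)
  qed
  moreover have "- s*y*(1-y) + a0*(1-y) - b0*y = s*(y-r)*(y-r-d)" for y
  proof -
    have "s*(y-r)*(y-r-d) = s*y^2 - S*y + (S^2 - q^2)/(4* s)"
      using s by (simp add: r_def d_def field_simps power2_eq_square)
    also have "(S^2 - q^2)/(4* s) = a0" using s q2 by simp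
    finally show ?thesis by (simp add: S_def power2_eq_square algebra_simps)
  qed
  ultimately show ?thesis using that by blast
qed

lemma KF:
  fixes s d :: real
  assumes s: "s > 0" and d: "d \<ge> 0"
  obtains K F where "\<And>t. (K has_real_derivative s*d*K t) (at t)"
    "\<And>t. (F has_real_derivative s*K t) (at t)"
    "K 0 = 1" "F 0 = 0" "\<And>t. d * F t = K t - 1" "\<And>t. t \<ge> 0 \<Longrightarrow> K t \<ge> 1"
    "\<And>t. t \<ge> 0 \<Longrightarrow> F t \<ge> 0"
proof (cases "d = 0")
  case True
  show ?thesis
    by (rule that[of "\<lambda>t. 1" "\<lambda>t. s*t"]) (use True s in \<open>auto intro!: derivative_eq_intros\<close>)
next
  case False
  then have dp: "d > 0" using d by simp
  show ?thesis
  proof (rule that[of "\<lambda>t. exp (s*d*t)" "\<lambda>t. (exp (s*d*t) - 1)/d"])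
    show "\<And>t. ((\<lambda>t. exp (s*d*t)) has_real_derivative s*d*exp (s*d*t)) (at t)"
      by (auto intro!: derivative_eq_intros)
    show "\<And>t. ((\<lambda>t. (exp (s*d*t) - 1)/d) has_real_derivative s*exp (s*d*t)) (at t)"
      using dp by (auto intro!: derivative_eq_intros)
    show "\<And>t. d * ((exp (s*d*t) - 1)/d) = exp (s*d*t) - 1" using dp by simp
    show "\<And>t. t \<ge> 0 \<Longrightarrow> exp (s*d*t) \<ge> 1" using s d by simp
    show "\<And>t. t \<ge> 0 \<Longrightarrow> (exp (s*d*t) - 1)/d \<ge> 0" using s d dp by simp
  qed simp_all
qed

lemma ode_unique:
  fixes Y Z :: "real \<Rightarrow> real" and s d r t :: real
  assumes dY: "\<And>t. t \<ge> 0 \<Longrightarrow> (Y has_real_derivative s*(Y t - r)*(Y t - r - d)) (at t within {0..})"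
    and dZ: "\<And>t. t \<ge> 0 \<Longrightarrow> (Z has_real_derivative s*(Z t - r)*(Z t - r - d)) (at t within {0..})"
    and init: "Y 0 = Z 0" and t: "t \<ge> 0"
  shows "Y t = Z t"
proof -
  have cY: "continuous_on {0..} Y"
    using DERIV_continuous[OF dY] by (auto simp: continuous_on_eq_continuous_within)
  have cZ: "continuous_on {0..} Z"
    using DERIV_continuous[OF dZ] by (auto simp: continuous_on_eq_continuous_within)
  have cY': "continuous_on {0..t} Y" by (rule continuous_on_subset[OF cY]) auto
  have cZ': "continuous_on {0..t} Z" by (rule continuous_on_subset[OF cZ]) auto
  define g where "g = (\<lambda>\<tau>. s*(Y \<tau> + Z \<tau> - 2*r - d))"
  have cg: "continuous_on {0..t} (\<lambda>\<tau>. \<bar>g \<tau>\<bar>)"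
    unfolding g_def using cY' cZ'
    by (intro continuous_intros)
  obtain m where m: "m \<in> {0..t}" and mM: "\<And>\<tau>. \<tau> \<in> {0..t} \<Longrightarrow> \<bar>g \<tau>\<bar> \<le> \<bar>g m\<bar>"
    using continuous_attains_sup[OF compact_Icc _ cg] t by auto
  define M where "M = \<bar>g m\<bar>"
  define h where "h = (\<lambda>\<tau>. (Y \<tau> - Z \<tau>)^2 * exp (-2*M*\<tau>))"
  have "h t \<le> h 0"
  proof (rule DERIV_nonpos_imp_decreasing_open[OF t])
    show "continuous_on {0..t} h" unfolding h_def using cY' cZ'
      by (intro continuous_intros)
    fix x assume x: "0 < x" "x < t"
    have ix: "x \<in> interior {0::real..}" using x by simp
    have DY: "(Y has_real_derivative s*(Y x - r)*(Y x - r - d)) (at x)"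
      using dY[of x] x at_within_interior[OF ix] by simp
    have DZ: "(Z has_real_derivative s*(Z x - r)*(Z x - r - d)) (at x)"
      using dZ[of x] x at_within_interior[OF ix] by simp
    have "(h has_real_derivative 2*(Y x - Z x)^2*(g x - M)*exp (-2*M*x)) (at x)"
      unfolding h_def
      apply (rule derivative_eq_intros DY DZ refl | simp)+
      by (simp add: g_def power2_eq_square algebra_simps)
    moreover have "2*(Y x - Z x)^2*(g x - M)*exp (-2*M*x) \<le> 0"
    proof -
      have "g x \<le> M" using mM[of x] x unfolding M_def by auto
      then show ?thesis by (simp add: mult_nonneg_nonpos2 mult_nonpos_nonneg)
    qed
    ultimately show "\<exists>y. (h has_real_derivative y) (at x) \<and> y \<le> 0" by blast
  qed
  moreover have "h 0 = 0" using init by (simp add: h_def)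
  ultimately have "(Y t - Z t)^2 * exp (-2*M*t) \<le> 0" by (simp add: h_def)
  then have "(Y t - Z t)^2 \<le> 0" by (simp add: mult_le_0_iff)
  then show ?thesis by simp
qed



context
  fixes s d r :: real and K F :: "real \<Rightarrow> real"
  assumes s: "s > 0" and d: "d \<ge> 0"
    and dK: "\<And>t. (K has_real_derivative s*d*K t) (at t)"
    and dF: "\<And>t. (F has_real_derivative s*K t) (at t)"
    and K0: "K 0 = 1" and F0: "F 0 = 0" and dFK: "\<And>t. d * F t = K t - 1"
    and Kge: "\<And>t. t \<ge> 0 \<Longrightarrow> K t \<ge> 1" and Fge: "\<And>t. t \<ge> 0 \<Longrightarrow> F t \<ge> 0"
begin

lemma Dge: assumes "x \<le> r + d" "t \<ge> 0" shows "K t - (x - r) * F t \<ge> 1"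
proof (cases "x - r \<ge> 0")
  case True
  have "(x - r) * F t \<le> d * F t" using assms Fge[of t] by (intro mult_right_mono) auto
  then show ?thesis using dFK[of t] by linarith
next
  case False
  then have "(x - r) * F t \<le> 0" using Fge[OF assms(2)] by (simp add: mult_nonpos_nonneg)
  then show ?thesis using Kge[OF assms(2)] by linarith
qed

lemma Vx: assumes "x \<le> r + d" "t \<ge> 0"
  shows "((\<lambda>y. r + (y - r)/(K t - (y - r)*F t)) has_real_derivative K t/(K t - (x - r)*F t)^2) (at x)"
proof -
  have D: "K t - (x - r)*F t \<noteq> 0" using Dge[OF assms] by linarith
  show ?thesis
    apply (rule derivative_eq_intros refl)+
      apply (use D in simp)
     apply (rule refl)
    using D by (simp add: field_simps power2_eq_square)
qed

lemma Vt: assumes "x \<le> r + d" "t \<ge> 0"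
  shows "((\<lambda>\<tau>. r + (x - r)/(K \<tau> - (x - r)*F \<tau>)) has_real_derivative
     s*(x-r)*(x-r-d)*K t/(K t - (x - r)*F t)^2) (at t)"
proof -
  have D: "K t - (x - r)*F t \<noteq> 0" using Dge[OF assms] by linarith
  show ?thesis
    apply (rule derivative_eq_intros refl dK dF)+
      apply (use D in simp)
     apply (rule refl)
    using D by (simp add: field_simps power2_eq_square)
qed

lemma Vode: assumes "x \<le> r + d" "t \<ge> 0"
  shows "s*(x-r)*(x-r-d)*K t/(K t - (x - r)*F t)^2 =
    s*((r + (x - r)/(K t - (x - r)*F t)) - r)*((r + (x - r)/(K t - (x - r)*F t)) - r - d)"
proof -
  define DD where "DD = K t - (x - r)*F t"
  have DD: "DD \<noteq> 0" using Dge[OF assms] by (simp add: DD_def)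
  have e0: "(x - r) - d*DD = K t * (x - r - d) + (x - r)*(1 + d*F t - K t)"
    by (simp add: DD_def algebra_simps)
  have e: "(x - r) - d*DD = K t * (x - r - d)"
    unfolding e0 using dFK[of t] by simp
  have q1: "(x - r)/DD - d = ((x - r) - d*DD)/DD" using DD by (simp add: field_simps)
  have "s*((r + (x - r)/DD) - r)*((r + (x - r)/DD) - r - d)
      = s*((x - r)/DD)*((x - r)/DD - d)" by simp
  also have "\<dots> = s*((x - r)/DD)*(((x - r) - d*DD)/DD)" by (simp only: q1)
  also have "\<dots> = s*(x - r)*((x - r) - d*DD)/DD^2" by (simp add: power2_eq_square)
  also have "\<dots> = s*(x-r)*(x-r-d)*K t/DD^2" by (simp only: e) (simp add: algebra_simps)
  finally show ?thesis unfolding DD_def[symmetric] by simp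
qed

lemma Vconv: assumes "x \<le> r + d" "y \<le> r + d" "t \<ge> 0"
  shows "(r + (y - r)/(K t - (y - r)*F t)) - (r + (x - r)/(K t - (x - r)*F t))
     \<ge> (y - x) * (K t/(K t - (x - r)*F t)^2)"
proof -
  define D where "D = K t - (x - r)*F t"
  define D' where "D' = K t - (y - r)*F t"
  have Dp: "D \<ge> 1" using Dge[OF assms(1,3)] by (simp add: D_def)
  have D'p: "D' \<ge> 1" using Dge[OF assms(2,3)] by (simp add: D'_def)
  have i1: "(y - r)*D - (x - r)*D' = K t*(y - x)" by (simp add: D_def D'_def algebra_simps)
  have i2: "D - D' = (y - x)*F t" by (simp add: D_def D'_def algebra_simps)
  have "(r + (y - r)/D') - (r + (x - r)/D) = ((y - r)*D - (x - r)*D')/(D*D')"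
    using Dp D'p by (simp add: field_simps)
  also have "\<dots> = K t*(y - x)/(D*D')" by (simp add: i1)
  finally have s1: "(r + (y - r)/D') - (r + (x - r)/D) = K t*(y - x)/(D*D')" .
  have "K t*(y - x)/(D*D') - (y - x) * (K t/D^2) = K t*(y - x)*(D - D')/(D^2*D')"
    using Dp D'p by (simp add: field_simps power2_eq_square)
  also have "\<dots> = K t * F t * (y - x)^2 / (D^2 * D')" by (simp add: i2 power2_eq_square algebra_simps)
  finally have eq: "(r + (y - r)/D') - (r + (x - r)/D) - (y - x) * (K t/D^2) = K t * F t * (y - x)^2 / (D^2 * D')"
    using s1 by simp
  have "K t * F t * (y - x)^2 / (D^2 * D') \<ge> 0" using Kge[OF assms(3)] Fge[OF assms(3)] Dp D'p
    by (intro divide_nonneg_nonneg mult_nonneg_nonneg) auto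
  then have "(r + (y - r)/D') - (r + (x - r)/D) \<ge> (y - x) * (K t/D^2)" using eq by linarith
  then show ?thesis unfolding D_def D'_def .
qed

lemma V0: "r + (x - r)/(K 0 - (x - r)*F 0) = x" using K0 F0 by simp

lemma Vcont: assumes "1 \<le> r + d"
  shows "continuous_on ({0..1} \<times> {0..}) (\<lambda>p. r + (fst p - r)/(K (snd p) - (fst p - r)*F (snd p)))"
proof (rule continuous_at_imp_continuous_on, intro ballI)
  fix p :: "real \<times> real" assume p: "p \<in> {0..1} \<times> {0..}"
  obtain x t where xt: "p = (x,t)" by (cases p)
  have x: "x \<in> {0..1}" and t: "t \<in> {0..}" using p xt by auto
  have D: "K t - (x - r)*F t \<noteq> 0" using Dge[of x t] x t assms by fastforce
  have cK: "isCont K t" using dK by (rule DERIV_isCont)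
  have cF: "isCont F t" using dF by (rule DERIV_isCont)
  have cs: "isCont snd (x,t)" by (intro continuous_intros)
  have cK2: "isCont (\<lambda>p. K (snd p)) (x,t)" using isCont_o2[OF cs] cK by simp
  have cF2: "isCont (\<lambda>p. F (snd p)) (x,t)" using isCont_o2[OF cs] cF by simp
  have "isCont (\<lambda>p. r + (fst p - r)/(K (snd p) - (fst p - r)*F (snd p))) (x,t)"
    apply (rule continuous_add[OF continuous_const])
    apply (rule continuous_divide)
      apply (rule continuous_diff[OF continuous_fst[OF continuous_ident] continuous_const])
     apply (rule continuous_diff[OF cK2 continuous_mult[OF continuous_diff[OF continuous_fst[OF continuous_ident] continuous_const] cF2]])
    using D by simp
  then show "isCont (\<lambda>p. r + (fst p - r)/(K (snd p) - (fst p - r)*F (snd p))) p" unfolding xt .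
qed

end

theorem proposition4p4:
  fixes f0 f1 lam0 lam1 gam0 gam1 :: real
    and u ux ut :: "real \<Rightarrow> real \<Rightarrow> real"
    and X :: "real \<Rightarrow> real \<Rightarrow> real"
  defines "\<sigma> \<equiv> f0 - f1"
      and "m0 \<equiv> lam0 * gam0"
      and "m1 \<equiv> lam1 * gam1"
  assumes f0_pos: "f0 > 0" and f1_nonneg: "f1 \<ge> 0" and sigma_pos: "\<sigma> > 0"
    and lam0: "lam0 \<ge> 0" and lam1: "lam1 \<ge> 0"
    and gam0: "0 < gam0" "gam0 \<le> 1" and gam1: "0 < gam1" "gam1 \<le> 1"
    \<comment> \<open>u is a (smooth) solution of the Cauchy problem on [0,1] x [0,oo)\<close>
    and u_cont: "continuous_on ({0..1} \<times> {0..}) (\<lambda>(x, t). u x t)"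
    and ux_cont: "continuous_on ({0..1} \<times> {0..}) (\<lambda>(x, t). ux x t)"
    and ut_cont: "continuous_on ({0..1} \<times> {0..}) (\<lambda>(x, t). ut x t)"
    and u_dx: "\<And>x t. x \<in> {0..1} \<Longrightarrow> t \<ge> 0 \<Longrightarrow>
                 ((\<lambda>y. u y t) has_real_derivative ux x t) (at x within {0..1})"
    and u_dt: "\<And>x t. x \<in> {0..1} \<Longrightarrow> t \<ge> 0 \<Longrightarrow>
                 ((\<lambda>s. u x s) has_real_derivative ut x t) (at t within {0..})"
    and u_pde: "\<And>x t. x \<in> {0..1} \<Longrightarrow> t > 0 \<Longrightarrow>
                 ut x t + \<sigma> * (1 - x) * x * ux x t
                 = lam0 * f0 * (u (x + gam0 * (1 - x)) t - u x t)
                 + lam1 * f1 * (u (x - gam1 * x) t - u x t)"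
    and u_init: "\<And>x. x \<in> {0..1} \<Longrightarrow> u x 0 = x"
    \<comment> \<open>X x t is the solution at time t of the quasispecies ODE started at x\<close>
    and X_init: "\<And>x. x \<in> {0..1} \<Longrightarrow> X x 0 = x"
    and X_ode: "\<And>x t. x \<in> {0..1} \<Longrightarrow> t \<ge> 0 \<Longrightarrow>
                 ((\<lambda>s. X x s) has_real_derivative
                   (- \<sigma> * X x t * (1 - X x t) + m0 * f0 * (1 - X x t) - m1 * f1 * X x t))
                 (at t within {0..})"
  shows "\<forall>x\<in>{0..1}. \<forall>t\<ge>0. X x t \<le> u x t \<and> u x t \<le> 1"
proof -
  have A0: "m0*f0 \<ge> 0" unfolding m0_def using lam0 gam0 f0_pos by simp
  have B0: "m1*f1 \<ge> 0" unfolding m1_def using lam1 gam1 f1_nonneg by simp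
  obtain r d where d0: "d \<ge> 0" and rd: "r + d \<ge> 1"
    and bq: "\<And>y. - \<sigma>*y*(1-y) + (m0*f0)*(1-y) - (m1*f1)*y = \<sigma>*(y-r)*(y-r-d)"
    using roots[OF sigma_pos A0 B0] by blast
  obtain K F where dK: "\<And>t. (K has_real_derivative \<sigma>*d*K t) (at t)"
    and dF: "\<And>t. (F has_real_derivative \<sigma>*K t) (at t)"
    and K0: "K 0 = 1" and F0: "F 0 = 0" and dFK: "\<And>t. d * F t = K t - 1"
    and Kge: "\<And>t. t \<ge> 0 \<Longrightarrow> K t \<ge> 1" and Fge: "\<And>t. t \<ge> 0 \<Longrightarrow> F t \<ge> 0"
    using KF[OF sigma_pos d0] by blast
  note ctx = sigma_pos d0 dK dF K0 F0 dFK Kge Fge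
  define V where "V = (\<lambda>x t. r + (x - r)/(K t - (x - r)*F t))"
  define Vx where "Vx = (\<lambda>x t. K t/(K t - (x - r)*F t)^2)"
  define Vt where "Vt = (\<lambda>x t. \<sigma>*(x-r)*(x-r-d)*K t/(K t - (x - r)*F t)^2)"
  have xle: "x \<le> r + d" if "x \<in> {0..1}" for x using that rd by auto
  have dVx: "((\<lambda>y. V y t) has_real_derivative Vx x t) (at x)" if "x \<in> {0..1}" "t \<ge> 0" for x t
    unfolding V_def Vx_def by (rule Vx[OF ctx xle[OF that(1)] that(2)])
  have dVt: "((\<lambda>s. V x s) has_real_derivative Vt x t) (at t)" if "x \<in> {0..1}" "t \<ge> 0" for x t
    unfolding V_def Vt_def by (rule Vt[OF ctx xle[OF that(1)] that(2)])
  have Vod: "Vt x t = \<sigma>*(V x t - r)*(V x t - r - d)" if "x \<in> {0..1}" "t \<ge> 0" for x t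
    unfolding V_def Vt_def by (rule Vode[OF ctx xle[OF that(1)] that(2)])
  have Vcv: "V y t - V x t \<ge> (y - x) * Vx x t" if "x \<in> {0..1}" "y \<in> {0..1}" "t \<ge> 0" for x y t
    unfolding V_def Vx_def by (rule Vconv[OF ctx xle[OF that(1)] xle[OF that(2)] that(3)])
  have V0': "V x 0 = x" for x unfolding V_def by (rule V0[OF ctx])
  have Vb: "Vt x t = (- \<sigma>*x*(1-x) + (m0*f0)*(1-x) - (m1*f1)*x) * Vx x t" for x t
    unfolding Vt_def Vx_def bq by (simp only: times_divide_eq_right)
  have XV: "X x t = V x t" if x: "x \<in> {0..1}" and t: "t \<ge> 0" for x t
  proof (rule ode_unique[of "X x" \<sigma> r d "V x", OF _ _ _ t])
    show "(X x has_real_derivative \<sigma>*(X x s - r)*(X x s - r - d)) (at s within {0..})" if "s \<ge> 0" for s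
      using X_ode[OF x that] unfolding bq .
    show "(V x has_real_derivative \<sigma>*(V x s - r)*(V x s - r - d)) (at s within {0..})" if "s \<ge> 0" for s
      using has_field_derivative_at_within[OF dVt[OF x that]] unfolding Vod[OF x that] .
    show "X x 0 = V x 0" using X_init[OF x] V0' by simp
  qed
  have gm0: "x + gam0*(1-x) \<in> {0..1}" if x: "x \<in> {0..1}" for x
  proof -
    have "gam0*(1-x) \<le> 1*(1-x)" using x gam0 by (intro mult_right_mono) auto
    moreover have "gam0*(1-x) \<ge> 0" using x gam0 by simp
    ultimately show ?thesis using x by auto
  qed
  have gm1: "x - gam1*x \<in> {0..1}" if x: "x \<in> {0..1}" for x
  proof -
    have "gam1*x \<le> 1*x" using x gam1 by (intro mult_right_mono) auto
    moreover have "gam1*x \<ge> 0" using x gam1 by simp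
    ultimately show ?thesis using x by auto
  qed
  have c0: "lam0*f0 \<ge> 0" using lam0 f0_pos by simp
  have c1: "lam1*f1 \<ge> 0" using lam1 f1_nonneg by simp
  have Vu: "V x t - u x t \<le> 0" if x: "x \<in> {0..1}" and t: "t \<ge> 0" for x t
  proof (rule maxprin[where W="\<lambda>x t. V x t - u x t" and Wx="\<lambda>x t. Vx x t - ux x t"
        and Wt="\<lambda>x t. Vt x t - ut x t" and s=\<sigma> and ca="lam0*f0" and cb="lam1*f1" and ga=gam0 and gb=gam1,
        OF _ _ _ _ c0 c1 _ gam0(2) _ gam1(2) _ x t])
    have e: "(\<lambda>(x,t). V x t - u x t) = (\<lambda>p. (r + (fst p - r)/(K (snd p) - (fst p - r)*F (snd p))) - (\<lambda>(x,t). u x t) p)"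
      by (simp add: V_def fun_eq_iff)
    show "continuous_on ({0..1} \<times> {0..}) (\<lambda>(x,t). V x t - u x t)"
      unfolding e by (intro continuous_on_diff Vcont[OF ctx rd] u_cont)
    show "((\<lambda>y. V y t - u y t) has_real_derivative Vx x t - ux x t) (at x within {0..1})"
      if "x \<in> {0..1}" "t > 0" for x t
      using DERIV_diff[OF has_field_derivative_at_within[OF dVx[of x t]] u_dx[of x t]] that by simp
    show "((\<lambda>s. V x s - u x s) has_real_derivative Vt x t - ut x t) (at t within {0..})"
      if "x \<in> {0..1}" "t > 0" for x t
      using DERIV_diff[OF has_field_derivative_at_within[OF dVt[of x t]] u_dt[of x t]] that by simp
    show "V x 0 - u x 0 \<le> 0" if "x \<in> {0..1}" for x using that V0' u_init by simp
    show "0 \<le> gam0" "0 \<le> gam1" using gam0 gam1 by auto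
    fix x t :: real assume x: "x \<in> {0..1}" and t: "t > 0"
    define a where "a = x + gam0*(1-x)"
    define b where "b = x - gam1*x"
    have a: "a \<in> {0..1}" using gm0[OF x] by (simp add: a_def)
    have b: "b \<in> {0..1}" using gm1[OF x] by (simp add: b_def)
    have h0: "V a t - V x t \<ge> gam0*(1-x) * Vx x t" using Vcv[OF x a] t by (simp add: a_def)
    have h1: "V b t - V x t \<ge> (- gam1*x) * Vx x t" using Vcv[OF x b] t by (simp add: b_def)
    have k0: "lam0*f0*(V a t - V x t) \<ge> lam0*f0*(gam0*(1-x) * Vx x t)"
      using h0 c0 by (rule mult_left_mono)
    have k1: "lam1*f1*(V b t - V x t) \<ge> lam1*f1*((- gam1*x) * Vx x t)"
      using h1 c1 by (rule mult_left_mono)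
    have pde: "ut x t + \<sigma> * (1 - x) * x * ux x t = lam0 * f0 * (u a t - u x t) + lam1 * f1 * (u b t - u x t)"
      using u_pde[OF x t] by (simp add: a_def b_def)
    have z: "Vt x t + \<sigma>*(1-x)*x*Vx x t - lam0*f0*(gam0*(1-x) * Vx x t) - lam1*f1*((- gam1*x) * Vx x t) = 0"
      unfolding Vb m0_def m1_def by (simp add: algebra_simps)
    have "Vt x t - ut x t + \<sigma> * (1 - x) * x * (Vx x t - ux x t) -
        lam0 * f0 * (V a t - u a t - (V x t - u x t)) - lam1 * f1 * (V b t - u b t - (V x t - u x t))
      = (Vt x t + \<sigma>*(1-x)*x*Vx x t - lam0*f0*(V a t - V x t) - lam1*f1*(V b t - V x t))
        - (ut x t + \<sigma> * (1 - x) * x * ux x t - (lam0 * f0 * (u a t - u x t) + lam1 * f1 * (u b t - u x t)))"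
      by (simp add: algebra_simps)
    also have "\<dots> \<le> 0" using pde z k0 k1 by linarith
    finally show "Vt x t - ut x t + \<sigma> * (1 - x) * x * (Vx x t - ux x t) -
        lam0 * f0 * (V (x + gam0 * (1 - x)) t - u (x + gam0 * (1 - x)) t - (V x t - u x t)) -
        lam1 * f1 * (V (x - gam1 * x) t - u (x - gam1 * x) t - (V x t - u x t)) \<le> 0"
      by (simp add: a_def b_def)
  qed
  have u1: "u x t - 1 \<le> 0" if x: "x \<in> {0..1}" and t: "t \<ge> 0" for x t
  proof (rule maxprin[where W="\<lambda>x t. u x t - 1" and Wx="ux" and Wt="ut"
        and s=\<sigma> and ca="lam0*f0" and cb="lam1*f1" and ga=gam0 and gb=gam1,
        OF _ _ _ _ c0 c1 _ gam0(2) _ gam1(2) _ x t])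
    have e: "(\<lambda>(x,t). u x t - 1) = (\<lambda>p. (\<lambda>(x,t). u x t) p - 1)" by (simp add: fun_eq_iff)
    show "continuous_on ({0..1} \<times> {0..}) (\<lambda>(x,t). u x t - (1::real))"
      unfolding e by (intro continuous_on_diff continuous_on_const u_cont)
    show "((\<lambda>y. u y t - 1) has_real_derivative ux x t) (at x within {0..1})"
      if "x \<in> {0..1}" "t > 0" for x t
      using DERIV_diff[OF u_dx[of x t] DERIV_const[of 1]] that by simp
    show "((\<lambda>s. u x s - 1) has_real_derivative ut x t) (at t within {0..})"
      if "x \<in> {0..1}" "t > 0" for x t
      using DERIV_diff[OF u_dt[of x t] DERIV_const[of 1]] that by simp
    show "u x 0 - 1 \<le> 0" if "x \<in> {0..1}" for x using that u_init by simp
    show "0 \<le> gam0" "0 \<le> gam1" using gam0 gam1 by auto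
    fix x t :: real assume x: "x \<in> {0..1}" and t: "t > 0"
    show "ut x t + \<sigma> * (1 - x) * x * ux x t - lam0 * f0 * (u (x + gam0 * (1 - x)) t - 1 - (u x t - 1)) -
        lam1 * f1 * (u (x - gam1 * x) t - 1 - (u x t - 1)) \<le> 0"
      using u_pde[OF x t] by simp
  qed
  show ?thesis using XV Vu u1 by fastforce
qed

end
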